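(* Let $N\ge2$ and $r\in(0,1)$. The revenue guarantee of the second price auction with random reserve distributed according to $G_r(x)=(x/r)^{\frac1{N-1}}$, $x\in[0,r]$, is at least $$\int_{[0,r]}\frac{x^{\frac N{N-1}}}{r^{\frac1{N-1}}}\,dF(x)+r(1-F(r)).$$
   Context: A single indivisible good is sold to $N$ bidders with private values $v_i\in[0,1]$, each with the same marginal cdf $F$ on $[0,1]$ (point masses allowed). $\Pi(F)$ is the set of probability measures on $[0,1]^N$ with all one-dimensional marginals $F$. The revenue guarantee of a mechanism with payments $t$ (under truthful bidding) is $\inf_{\pi\in\Pi(F)}\int\sum_it_i\,d\pi$. The second price auction with random reserve distributed as a cdf $G$: a reserve $\rho\sim G$ is drawn independently of bids; a highest bidder (ties broken uniformly at random) wins if her bid is at least $\rho$ and pays $\max(\rho,\text{second highest bid})$; equivalently a unique highest bidder with value $v_{(1)}$ wins with probability $G(v_{(1)})$ and pays $v_{(1)}G(v_{(1)})-\int_{v_{(2)}}^{v_{(1)}}G(s)\,ds$, where $v_{(2)}$ is the second highest value. *)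

theory Defs
  imports "HOL-Probability.Probability"
begin

text \<open>Bid/value profiles of N bidders are functions on the index set {..<N}.\<close>

definition highest :: "nat \<Rightarrow> (nat \<Rightarrow> real) \<Rightarrow> real" where
  "highest N v = Max (v ` {..<N})"

text \<open>Second highest value (counted with multiplicity): removing one highest bidder
  and taking the maximum of the rest; equals the highest value in case of ties.\<close>
definition second_highest :: "nat \<Rightarrow> (nat \<Rightarrow> real) \<Rightarrow> real" where
  "second_highest N v = Min ((\<lambda>i. Max (v ` ({..<N} - {i}))) ` {..<N})"

text \<open>Expected payment of bidder i in the second price auction with random reserve
  with cdf G (reserve independent of bids, ties at the top broken uniformly at random).
  A highest bidder wins with probability G(v1) and pays in expectation
  v1 G(v1) - integral from v2 to v1 of G; with ties this is shared uniformly.\<close>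
definition spa_payment ::
  "(real \<Rightarrow> real) \<Rightarrow> nat \<Rightarrow> nat \<Rightarrow> (nat \<Rightarrow> real) \<Rightarrow> real" where
  "spa_payment G N i v =
     (if v i = highest N v
      then (1 / real (card {j\<in>{..<N}. v j = highest N v})) *
           (highest N v * G (highest N v) - integral {second_highest N v .. highest N v} G)
      else 0)"

definition spa_revenue :: "(real \<Rightarrow> real) \<Rightarrow> nat \<Rightarrow> (nat \<Rightarrow> real) \<Rightarrow> real" where
  "spa_revenue G N v = (\<Sum>i<N. spa_payment G N i v)"

definition profile_space :: "nat \<Rightarrow> (nat \<Rightarrow> real) measure" where
  "profile_space N = PiM {..<N} (\<lambda>_. borel)"

definition couplings :: "nat \<Rightarrow> real measure \<Rightarrow> (nat \<Rightarrow> real) measure set" where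
  "couplings N \<mu> = {\<pi>. prob_space \<pi> \<and> sets \<pi> = sets (profile_space N) \<and>
                        (\<forall>i<N. distr \<pi> borel (\<lambda>v. v i) = \<mu>)}"

definition revenue_guarantee ::
  "(real \<Rightarrow> real) \<Rightarrow> nat \<Rightarrow> real measure \<Rightarrow> real" where
  "revenue_guarantee G N \<mu> = (INF \<pi>\<in>couplings N \<mu>. \<integral>v. spa_revenue G N v \<partial>\<pi>)"

definition G_reserve :: "nat \<Rightarrow> real \<Rightarrow> real \<Rightarrow> real" where
  "G_reserve N r x = (if x < 0 then 0 else if x \<le> r then (x / r) powr (1 / (real N - 1)) else 1)"

end

theory Submission
  imports Defs
begin


definition mm :: "real \<Rightarrow> real \<Rightarrow> real" where "mm r x = max 0 (min x r)"
definition psi :: "nat \<Rightarrow> real \<Rightarrow> real \<Rightarrow> real" where "psi N r x = mm r x * G_reserve N r x"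
definition AA :: "nat \<Rightarrow> real \<Rightarrow> real \<Rightarrow> real" where "AA N r x = x * G_reserve N r x - psi N r x / real N"

lemma G_alt:
  assumes "0 < r" shows "G_reserve N r x = (mm r x / r) powr (1 / (real N - 1))"
  using assms by (auto simp: G_reserve_def mm_def)

lemma G_cont:
  assumes "0 < r" "N \<ge> 2" shows "continuous_on UNIV (G_reserve N r)"
proof -
  have "continuous_on UNIV (\<lambda>x. (mm r x / r) powr (1 / (real N - 1)))"
    unfolding mm_def using assms
    by (intro continuous_on_powr' continuous_intros) auto
  then show ?thesis using G_alt[OF assms(1)] by presburger
qed

lemma G_bounds:
  assumes "0 < r" "N \<ge> 2" shows "0 \<le> G_reserve N r x" "G_reserve N r x \<le> 1"
proof -
  have m: "0 \<le> mm r x / r" "mm r x / r \<le> 1" using assms by (auto simp: mm_def)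
  show "0 \<le> G_reserve N r x" by (auto simp: G_alt[OF assms(1)])
  show "G_reserve N r x \<le> 1" unfolding G_alt[OF assms(1)]
    using m assms by (intro powr_le1) (auto simp: mm_def)
qed

lemma G_mono:
  assumes "0 < r" "N \<ge> 2" "x \<le> y" shows "G_reserve N r x \<le> G_reserve N r y"
proof -
  have "mm r x / r \<le> mm r y / r" using assms by (auto simp: mm_def divide_right_mono)
  moreover have "0 \<le> mm r x / r" using assms by (auto simp: mm_def)
  ultimately show ?thesis unfolding G_alt[OF assms(1)]
    using assms(2) by (intro powr_mono2) auto
qed

lemma psi_mono:
  assumes "0 < r" "N \<ge> 2" "x \<le> y" shows "psi N r x \<le> psi N r y"
  unfolding psi_def using G_mono[OF assms] G_bounds[OF assms(1,2)] assms
  by (intro mult_mono) (auto simp: mm_def)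

lemma psi_bounds:
  assumes "0 < r" "N \<ge> 2" "r < 1" shows "0 \<le> psi N r x" "psi N r x \<le> 1"
  using G_bounds[OF assms(1,2), of x] assms unfolding psi_def mm_def
  by (auto intro: mult_le_one)

lemma psi_cont:
  assumes "0 < r" "N \<ge> 2" shows "continuous_on UNIV (psi N r)"
  unfolding psi_def mm_def
  by (intro continuous_intros G_cont[OF assms])

lemma AA_cont:
  assumes "0 < r" "N \<ge> 2" shows "continuous_on UNIV (AA N r)"
  unfolding AA_def
  using assms by (intro continuous_intros G_cont[OF assms] psi_cont[OF assms]) auto



lemma AA_deriv:
  assumes r: "0 < r" and N: "N \<ge> 2" and x: "x \<noteq> 0" "x \<noteq> r"
  shows "(AA N r has_real_derivative G_reserve N r x) (at x)"
proof -
  define a where "a = 1 / (real N - 1)"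
  have a: "a > 0" using N by (auto simp: a_def)
  have Na: "(1 - 1 / real N) * (1 + a) = 1" using N by (auto simp: a_def field_simps)
  consider "x < 0" | "0 < x \<and> x < r" | "r < x" using x by linarith
  then show ?thesis
  proof cases
    case 1
    have eq: "\<And>y. y \<in> {..<0} \<Longrightarrow> (\<lambda>_. 0) y = AA N r y"
      using r by (auto simp: AA_def psi_def mm_def G_reserve_def)
    have "((\<lambda>_. 0::real) has_real_derivative 0) (at x)" by simp
    from has_field_derivative_transform_within_open[where g="AA N r" and S="{..<0}", OF this _ _ eq]
    show ?thesis using 1 r by (auto simp: G_reserve_def)
  next
    case 2
    have pa: "a * (x/r) powr (a-1) * x / r = (x/r) powr a * a"
    proof -
      have "(x/r) powr (a-1) * (x/r) = (x/r) powr a" using 2 r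
        by (simp add: powr_diff)
      then show ?thesis by (metis (no_types, lifting) mult.commute times_divide_eq_right mult.assoc)
    qed
    have eq: "\<And>y. y \<in> {0<..<r} \<Longrightarrow> (\<lambda>y. (1 - 1 / real N) * (y * (y / r) powr a)) y = AA N r y"
      using r by (auto simp: AA_def psi_def mm_def G_reserve_def a_def algebra_simps)
    have "((\<lambda>y. (1 - 1 / real N) * (y * (y / r) powr a)) has_real_derivative
       (1 - 1 / real N) * (1 * (x / r) powr a + x * ((x / r) powr a * (0 * ln (x / r) + 1 / r * a / (x / r))))) (at x)"
      using 2 r pa by (intro derivative_eq_intros refl) auto
    also have "(1 - 1 / real N) * (1 * (x / r) powr a + x * ((x / r) powr a * (0 * ln (x / r) + 1 / r * a / (x / r))))
       = (1 - 1 / real N) * (1 + a) * (x / r) powr a"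
      using 2 r by (simp add: field_simps add_divide_distrib)
    also have "\<dots> = G_reserve N r x" using Na 2 by (simp add: G_reserve_def a_def)
    finally have d: "((\<lambda>y. (1 - 1 / real N) * (y * (y / r) powr a)) has_real_derivative G_reserve N r x) (at x)" .
    from has_field_derivative_transform_within_open[where g="AA N r" and S="{0<..<r}", OF d _ _ eq]
    show ?thesis using 2 by auto
  next
    case 3
    have eq: "\<And>y. y \<in> {r<..} \<Longrightarrow> (\<lambda>y. y - r / real N) y = AA N r y"
      using r by (auto simp: AA_def psi_def mm_def G_reserve_def)
    have "((\<lambda>y. y - r / real N) has_real_derivative 1) (at x)"
      by (intro derivative_eq_intros) auto
    from has_field_derivative_transform_within_open[where g="AA N r" and S="{r<..}", OF this _ _ eq]
    show ?thesis using 3 r by (auto simp: G_reserve_def)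
  qed
qed

lemma G_has_integral:
  assumes r: "0 < r" and N: "N \<ge> 2" and sh: "s \<le> h"
  shows "(G_reserve N r has_integral (AA N r h - AA N r s)) {s..h}"
proof (rule fundamental_theorem_of_calculus_interior_strong[where S="{0, r}"])
  show "continuous_on {s..h} (AA N r)"
    using AA_cont[OF r N] continuous_on_subset by blast
  fix x assume "x \<in> {s<..<h} - {0, r}"
  then show "(AA N r has_vector_derivative G_reserve N r x) (at x)"
    using AA_deriv[OF r N] by (auto simp: has_real_derivative_iff_has_vector_derivative)
qed (use sh in auto)



lemma highest_props:
  assumes "N > 0"
  shows "highest N v \<in> v ` {..<N}" "\<And>i. i < N \<Longrightarrow> v i \<le> highest N v"
  using assms unfolding highest_def by (auto intro: Max_in)

lemma second_props:
  assumes "N \<ge> 2"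
  shows "\<exists>k<N. \<forall>j<N. j \<noteq> k \<longrightarrow> v j \<le> second_highest N v"
    "second_highest N v \<in> v ` {..<N}"
    "second_highest N v \<le> highest N v"
proof -
  have ne: "{..<N} - {i} \<noteq> {}" for i
  proof -
    have "(if i = 0 then 1 else 0) \<in> {..<N} - {i}" using assms by auto
    then show ?thesis by blast
  qed
  let ?S = "(\<lambda>i. Max (v ` ({..<N} - {i}))) ` {..<N}"
  have z: "(0::nat) \<in> {..<N}" using assms by simp
  have "second_highest N v \<in> ?S" unfolding second_highest_def
    using z by (intro Min_in) blast+
  then obtain k where k: "k < N" "second_highest N v = Max (v ` ({..<N} - {k}))" by auto
  show "\<exists>k<N. \<forall>j<N. j \<noteq> k \<longrightarrow> v j \<le> second_highest N v"
    using k by (intro exI[of _ k]) auto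
  have "Max (v ` ({..<N} - {k})) \<in> v ` ({..<N} - {k})"
    using ne[of k] by (intro Max_in) auto
  then show "second_highest N v \<in> v ` {..<N}" using k by auto
  then show "second_highest N v \<le> highest N v" using highest_props(2) assms by auto
qed

lemma revenue_eq:
  assumes "N > 0"
  shows "spa_revenue G N v = highest N v * G (highest N v) - integral {second_highest N v .. highest N v} G"
proof -
  let ?h = "highest N v"
  let ?X = "?h * G ?h - integral {second_highest N v .. ?h} G"
  let ?T = "{j\<in>{..<N}. v j = ?h}"
  have "card ?T > 0" using highest_props(1)[OF assms, of v] by (auto simp: card_gt_0_iff)
  have "spa_revenue G N v = (\<Sum>i<N. if v i = ?h then (1 / real (card ?T)) * ?X else 0)"
    unfolding spa_revenue_def spa_payment_def by simp
  also have "\<dots> = (\<Sum>i\<in>?T. (1 / real (card ?T)) * ?X)"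
    by (rule sum.inter_filter[symmetric]) simp
  also have "\<dots> = of_nat (card ?T) * ((1 / real (card ?T)) * ?X)" by (rule sum_constant)
  also have "\<dots> = ?X"
  proof -
    have c: "real (card ?T) \<noteq> 0" using \<open>card ?T > 0\<close> by linarith
    have gen: "\<And>n::real. n \<noteq> 0 \<Longrightarrow> n * (1 / n * ?X) = ?X" by simp
    show ?thesis using gen[OF c] .
  qed
  finally show ?thesis .
qed

lemma revenue_ge:
  assumes r: "0 < r" and N: "N \<ge> 2"
  shows "(\<Sum>i<N. psi N r (v i)) / real N \<le> spa_revenue (G_reserve N r) N v"
proof -
  let ?G = "G_reserve N r"
  define h where "h = highest N v"
  define s where "s = second_highest N v"
  have sh: "s \<le> h" using second_props(3)[OF N] by (simp add: s_def h_def)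
  have R: "spa_revenue ?G N v = psi N r h / N + s * ?G s - psi N r s / N"
    using revenue_eq[where G="?G" and v=v] integral_unique[OF G_has_integral[OF r N sh]] N
    by (simp add: h_def s_def AA_def)
  have sG: "psi N r s \<le> s * ?G s"
  proof (cases "s \<ge> 0")
    case True then show ?thesis unfolding psi_def mm_def
      using G_bounds[OF r N, of s] by (intro mult_right_mono) auto
  next
    case False then show ?thesis by (simp add: psi_def mm_def G_reserve_def)
  qed
  obtain k where k: "k < N" "\<And>j. j < N \<Longrightarrow> j \<noteq> k \<Longrightarrow> v j \<le> s"
    using second_props(1)[OF N, of v] by (auto simp: s_def)
  have "(\<Sum>i<N. psi N r (v i)) = psi N r (v k) + (\<Sum>i\<in>{..<N}-{k}. psi N r (v i))"
    using k by (simp add: sum.remove)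
  also have "\<dots> \<le> psi N r h + (\<Sum>i\<in>{..<N}-{k}. psi N r s)"
    using k psi_mono[OF r N] highest_props(2)[where v=v] N
    by (intro add_mono sum_mono) (auto simp: h_def)
  also have "\<dots> = psi N r h + (real N - 1) * psi N r s"
    using k N by (simp add: of_nat_diff)
  finally have S: "(\<Sum>i<N. psi N r (v i)) \<le> psi N r h + (real N - 1) * psi N r s" .
  have "(\<Sum>i<N. psi N r (v i)) / real N \<le> (psi N r h + (real N - 1) * psi N r s) / real N"
    using S N by (intro divide_right_mono) auto
  also have "\<dots> \<le> psi N r h / N + s * ?G s - psi N r s / N"
    using sG N by (simp add: field_simps)
  finally show ?thesis using R by simp
qed



lemma rev_closed:
  assumes r: "0 < r" and N: "N \<ge> 2"
  shows "spa_revenue (G_reserve N r) N v =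
    (\<lambda>x. x * G_reserve N r x - AA N r x) (highest N v) + AA N r (second_highest N v)"
  using revenue_eq[where G="G_reserve N r" and v=v] N
    integral_unique[OF G_has_integral[OF r N second_props(3)[OF N, of v]]]
  by simp

lemma rev_meas:
  assumes r: "0 < r" and N: "N \<ge> 2"
  shows "spa_revenue (G_reserve N r) N \<in> borel_measurable (profile_space N)"
proof -
  have comp: "\<And>i. i \<in> {..<N} \<Longrightarrow> (\<lambda>v. v i) \<in> borel_measurable (profile_space N)"
    unfolding profile_space_def by (rule measurable_component_singleton)
  have hm: "highest N \<in> borel_measurable (profile_space N)"
    unfolding highest_def[abs_def] by (intro borel_measurable_Max comp) auto
  have sm: "second_highest N \<in> borel_measurable (profile_space N)"
    unfolding second_highest_def[abs_def]
    by (intro borel_measurable_Min borel_measurable_Max comp) auto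
  have c1: "continuous_on UNIV (\<lambda>x. x * G_reserve N r x - AA N r x)"
    by (intro continuous_intros G_cont[OF r N] AA_cont[OF r N])
  have "(\<lambda>v. (\<lambda>x. x * G_reserve N r x - AA N r x) (highest N v) + AA N r (second_highest N v))
      \<in> borel_measurable (profile_space N)"
    by (intro borel_measurable_add borel_measurable_continuous_on[OF c1 hm]
        borel_measurable_continuous_on[OF AA_cont[OF r N] sm])
  moreover have "spa_revenue (G_reserve N r) N = (\<lambda>v. (\<lambda>x. x * G_reserve N r x - AA N r x) (highest N v) + AA N r (second_highest N v))"
    by (rule ext) (rule rev_closed[OF r N])
  ultimately show ?thesis by simp
qed

lemma psi_eq:
  assumes r: "0 < r" and N: "N \<ge> 2"
  shows "psi N r x = indicator {0..r} x * (x powr (real N / (real N - 1)) / r powr (1 / (real N - 1)))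
     + r * indicator {r<..} x"
proof -
  define a where "a = 1 / (real N - 1)"
  have a: "a > 0" using N by (auto simp: a_def)
  have Na: "real N / (real N - 1) = 1 + a" using N by (auto simp: a_def field_simps)
  consider "x < 0" | "0 \<le> x \<and> x \<le> r" | "r < x" by linarith
  then show ?thesis
  proof cases
    case 1 then show ?thesis using r by (simp add: psi_def mm_def indicator_def)
  next
    case 2
    have "psi N r x = x * (x / r) powr a" using 2 r by (simp add: psi_def mm_def G_reserve_def a_def)
    also have "\<dots> = x powr (1 + a) / r powr a"
    proof (cases "x = 0")
      case True then show ?thesis using a by simp
    next
      case False
      then have "x > 0" using 2 by simp
      then show ?thesis using r by (simp add: powr_divide powr_add)
    qed
    finally show ?thesis using 2 r by (simp add: Na a_def indicator_def)
  next
    case 3 then show ?thesis using r by (simp add: psi_def mm_def G_reserve_def indicator_def)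
  qed
qed

lemma lhs_eq:
  assumes r: "0 < r" "r < 1" and N: "N \<ge> 2"
    and mu: "prob_space \<mu>" "sets \<mu> = sets borel"
  shows "(\<integral>x\<in>{0..r}. x powr (real N / (real N - 1)) / r powr (1 / (real N - 1)) \<partial>\<mu>)
           + r * (1 - measure \<mu> {..r}) = (\<integral>x. psi N r x \<partial>\<mu>)"
proof -
  interpret prob_space \<mu> by fact
  have sp: "space \<mu> = UNIV" using sets_eq_imp_space_eq[OF mu(2)] by simp
  have pm: "psi N r \<in> borel_measurable \<mu>"
  proof -
    have "(borel_measurable \<mu> :: (real \<Rightarrow> real) set) = borel_measurable borel" by (rule measurable_cong_sets[OF mu(2)]) simp
    then show ?thesis using borel_measurable_continuous_onI[OF psi_cont[OF r(1) N]] by simp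
  qed
  have ip: "integrable \<mu> (psi N r)"
    using psi_bounds[OF r(1) N r(2)]
    by (intro integrable_const_bound[where B=1] pm) auto
  have ev: "{r<..} \<in> sets \<mu>" using mu(2) by simp
  have ii: "integrable \<mu> (\<lambda>x. r * indicator {r<..} x)"
    using ev by (intro integrable_mult_right integrable_real_indicator) (auto simp: emeasure_eq_measure)
  have "(\<integral>x\<in>{0..r}. x powr (real N / (real N - 1)) / r powr (1 / (real N - 1)) \<partial>\<mu>)
      = (\<integral>x. psi N r x - r * indicator {r<..} x \<partial>\<mu>)"
    unfolding set_lebesgue_integral_def using psi_eq[OF r(1) N] by (intro Bochner_Integration.integral_cong) auto
  also have "\<dots> = (\<integral>x. psi N r x \<partial>\<mu>) - r * measure \<mu> {r<..}"
    using ip ii ev by (simp add: Bochner_Integration.integral_diff)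
  also have "measure \<mu> {r<..} = 1 - measure \<mu> {..r}"
  proof -
    have "{r<..} = space \<mu> - {..r}" using sp by auto
    then show ?thesis using prob_compl[of "{..r}"] mu(2) by simp
  qed
  finally show ?thesis by (simp add: algebra_simps)
qed

lemma couplings_ne:
  assumes mu: "prob_space \<mu>" "sets \<mu> = sets borel"
  shows "couplings N \<mu> \<noteq> {}"
proof -
  define f where "f = (\<lambda>x::real. \<lambda>i\<in>{..<N}. x)"
  have fm: "f \<in> measurable \<mu> (profile_space N)"
  proof -
    have "(borel_measurable \<mu> :: (real \<Rightarrow> real) set) = borel_measurable borel" by (rule measurable_cong_sets[OF mu(2)]) simp
    then show ?thesis unfolding f_def profile_space_def by (intro measurable_restrict) simp
  qed
  define \<pi> where "\<pi> = distr \<mu> (profile_space N) f"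
  have "prob_space \<pi>" unfolding \<pi>_def using fm by (intro prob_space.prob_space_distr mu(1))
  moreover have "sets \<pi> = sets (profile_space N)" by (simp add: \<pi>_def)
  moreover have "distr \<pi> borel (\<lambda>v. v i) = \<mu>" if i: "i < N" for i
  proof -
    have ci: "(\<lambda>v. v i) \<in> measurable (profile_space N) borel"
      unfolding profile_space_def using i by (intro measurable_component_singleton) simp
    have "distr \<pi> borel (\<lambda>v. v i) = distr \<mu> borel ((\<lambda>v. v i) \<circ> f)"
      unfolding \<pi>_def by (rule distr_distr[OF ci fm])
    also have "(\<lambda>v. v i) \<circ> f = (\<lambda>x. x)" using i by (auto simp: f_def)
    also have "distr \<mu> borel (\<lambda>x. x) = \<mu>" by (rule distr_id2[OF mu(2)[symmetric]])
    finally show ?thesis .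
  qed
  ultimately have "\<pi> \<in> couplings N \<mu>" unfolding couplings_def by blast
  then show ?thesis by blast
qed



lemma AA_bounds:
  assumes r: "0 < r" "r < 1" and N: "N \<ge> 2" and x: "0 \<le> x" "x \<le> 1"
  shows "\<bar>x * G_reserve N r x\<bar> \<le> 1" "\<bar>AA N r x\<bar> \<le> 2"
proof -
  have g: "0 \<le> G_reserve N r x" "G_reserve N r x \<le> 1" using G_bounds[OF r(1) N] by auto
  have p: "0 \<le> psi N r x" "psi N r x \<le> 1" using psi_bounds[OF r(1) N r(2)] by auto
  show xg: "\<bar>x * G_reserve N r x\<bar> \<le> 1" using g x by (simp add: mult_le_one)
  have "\<bar>psi N r x / real N\<bar> \<le> 1" using p N by (simp add: divide_le_eq_1)
  then show "\<bar>AA N r x\<bar> \<le> 2" using xg unfolding AA_def by linarith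
qed

lemma rev_bound:
  assumes r: "0 < r" "r < 1" and N: "N \<ge> 2" and v: "\<forall>i\<in>{..<N}. v i \<in> {0..1}"
  shows "norm (spa_revenue (G_reserve N r) N v) \<le> 5"
proof -
  have h: "highest N v \<in> {0..1}" using highest_props(1)[of N v] N v by auto
  have s: "second_highest N v \<in> {0..1}" using second_props(2)[OF N, of v] v by auto
  show ?thesis using rev_closed[OF r(1) N, of v] AA_bounds[OF r N] h s
    by (auto simp: abs_le_iff) (smt (verit))+
qed

lemma key:
  assumes r: "0 < r" "r < 1" and N: "N \<ge> 2"
    and mu: "prob_space \<mu>" "sets \<mu> = sets borel" "measure \<mu> {0..1} = 1"
    and pi: "\<pi> \<in> couplings N \<mu>"
  shows "(\<integral>x. psi N r x \<partial>\<mu>) \<le> (\<integral>v. spa_revenue (G_reserve N r) N v \<partial>\<pi>)"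
proof -
  interpret M: prob_space \<mu> by fact
  have P: "prob_space \<pi>" and S: "sets \<pi> = sets (profile_space N)"
    and marg: "\<And>i. i < N \<Longrightarrow> distr \<pi> borel (\<lambda>v. v i) = \<mu>"
    using pi unfolding couplings_def by auto
  interpret P: prob_space \<pi> by fact
  have BM: "(borel_measurable \<pi> :: ((nat \<Rightarrow> real) \<Rightarrow> real) set) = borel_measurable (profile_space N)"
    by (rule measurable_cong_sets[OF S]) simp
  have ci: "\<And>i. i < N \<Longrightarrow> (\<lambda>v. v i) \<in> borel_measurable \<pi>"
    unfolding BM profile_space_def by (intro measurable_component_singleton) simp
  have psim: "psi N r \<in> borel_measurable borel"
    by (rule borel_measurable_continuous_onI[OF psi_cont[OF r(1) N]])
  have ipsi: "\<And>i. i < N \<Longrightarrow> integrable \<pi> (\<lambda>v. psi N r (v i))"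
    using psi_bounds[OF r(1) N r(2)]
    by (intro P.integrable_const_bound[where B=1] measurable_compose[OF ci psim]) auto
  have intpsi: "\<And>i. i < N \<Longrightarrow> (\<integral>v. psi N r (v i) \<partial>\<pi>) = (\<integral>x. psi N r x \<partial>\<mu>)"
    using integral_distr[OF ci psim] marg by metis
  have AE01: "AE v in \<pi>. \<forall>i\<in>{..<N}. v i \<in> {0..1}"
  proof (rule AE_finite_allI, simp)
    fix i assume i: "i \<in> {..<N}"
    have a: "AE x in \<mu>. x \<in> {0..1}" by (rule M.AE_prob_1) (use mu(3) in simp)
    have e: "distr \<pi> borel (\<lambda>v. v i) = \<mu>" using marg i by simp
    have "AE x in distr \<pi> borel (\<lambda>v. v i). x \<in> {0..1}" unfolding e by (rule a)
    then show "AE v in \<pi>. v i \<in> {0..1}"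
      using AE_distr_iff[OF ci[of i]] i by simp
  qed
  have Rm: "spa_revenue (G_reserve N r) N \<in> borel_measurable \<pi>"
    unfolding BM by (rule rev_meas[OF r(1) N])
  have iR: "integrable \<pi> (spa_revenue (G_reserve N r) N)"
    using AE01 rev_bound[OF r N]
    by (intro P.integrable_const_bound[where B=5] Rm) (auto elim: AE_mp)
  have "(\<integral>x. psi N r x \<partial>\<mu>) = (\<Sum>i<N. (\<integral>v. psi N r (v i) \<partial>\<pi>)) / real N"
    using intpsi N by simp
  also have "\<dots> = (\<integral>v. (\<Sum>i<N. psi N r (v i)) / real N \<partial>\<pi>)"
    using ipsi by (simp add: integral_sum)
  also have "\<dots> \<le> (\<integral>v. spa_revenue (G_reserve N r) N v \<partial>\<pi>)"
    using ipsi iR revenue_ge[OF r(1) N]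
    by (intro integral_mono integrable_divide_zero integrable_sum) auto
  finally show ?thesis .
qed

theorem lemma1:
  fixes N :: nat and r :: real and \<mu> :: "real measure"
  assumes "N \<ge> 2" and "0 < r" and "r < 1"
    and "prob_space \<mu>" and "sets \<mu> = sets borel" and "measure \<mu> {0..1} = 1"
  shows "(\<integral>x\<in>{0..r}. x powr (real N / (real N - 1)) / r powr (1 / (real N - 1)) \<partial>\<mu>)
           + r * (1 - measure \<mu> {..r})
         \<le> revenue_guarantee (G_reserve N r) N \<mu>"
proof -
  have "(\<integral>x\<in>{0..r}. x powr (real N / (real N - 1)) / r powr (1 / (real N - 1)) \<partial>\<mu>)
           + r * (1 - measure \<mu> {..r}) = (\<integral>x. psi N r x \<partial>\<mu>)"
    using lhs_eq assms by blast
  also have "\<dots> \<le> revenue_guarantee (G_reserve N r) N \<mu>"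
    unfolding revenue_guarantee_def
    using couplings_ne[OF assms(4,5), of N] key[OF assms(2,3,1,4,5,6)]
    by (intro cInf_greatest) auto
  finally show ?thesis .
qed


end
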